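(* Let $P$ and $P'$ be two populations with the same users, intervals $[l_i,r_i]$, speech points $p_i$, disutilities $b_i$, and initial adopters $\mathcal S_0$, differing only in personalization parameters, with $\lambda_i\ge\lambda_i'$ for all $i\in[n]$ (where $\lambda_i$ belongs to $P$ and $\lambda_i'$ to $P'$). Then $s_{\mathrm{opt}}(P)\le s_{\mathrm{opt}}(P')$.
   Context: A population consists of users $1,\dots,n$ and a set $\mathcal S_0$ of initial adopters; user $i$ has a closed interval $[l_i,r_i]$, speech point $p_i\in[l_i,r_i]$, disutility $b_i\ge0$ and personalization parameter $\lambda_i\in[0,1]$. For a set $\mathcal S\subseteq[n]$, user $i$'s utility is $u_i(\mathcal S)=\sum_{j\in\mathcal S\setminus\{i\}}\big(\mathbf 1[p_j\in[l_i,r_i]]-\lambda_ib_i\mathbf 1[p_j\notin[l_i,r_i]]\big)$. A compatible community is a set $\mathcal S$ with $u_i(\mathcal S)\ge0$ for all $i\in\mathcal S$; $s_{\mathrm{opt}}$ of a population is the maximum size of a compatible community. *)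

theory Defs
  imports Main "HOL-Analysis.Analysis"
begin

text \<open>Users are 0..n-1 (the paper's [n]). A population is given by
  intervals [l i, r i], speech points p i, disutilities b i, personalization
  parameters lam i and initial adopters S0 (the latter plays no role in s_opt).\<close>

definition valid_population ::
  "nat \<Rightarrow> (nat \<Rightarrow> real) \<Rightarrow> (nat \<Rightarrow> real) \<Rightarrow> (nat \<Rightarrow> real) \<Rightarrow> (nat \<Rightarrow> real)
   \<Rightarrow> (nat \<Rightarrow> real) \<Rightarrow> nat set \<Rightarrow> bool" where
  "valid_population n l r p b lam S0 \<longleftrightarrow>
     S0 \<subseteq> {..<n} \<and>
     (\<forall>i<n. l i \<le> p i \<and> p i \<le> r i \<and> 0 \<le> b i \<and> 0 \<le> lam i \<and> lam i \<le> 1)"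

definition utility ::
  "(nat \<Rightarrow> real) \<Rightarrow> (nat \<Rightarrow> real) \<Rightarrow> (nat \<Rightarrow> real) \<Rightarrow> (nat \<Rightarrow> real) \<Rightarrow> (nat \<Rightarrow> real)
   \<Rightarrow> nat set \<Rightarrow> nat \<Rightarrow> real" where
  "utility l r p b lam S i =
     (\<Sum>j\<in>S - {i}. (if p j \<in> {l i..r i} then 1 else 0)
                    - lam i * b i * (if p j \<notin> {l i..r i} then 1 else 0))"

definition compatible ::
  "nat \<Rightarrow> (nat \<Rightarrow> real) \<Rightarrow> (nat \<Rightarrow> real) \<Rightarrow> (nat \<Rightarrow> real) \<Rightarrow> (nat \<Rightarrow> real) \<Rightarrow> (nat \<Rightarrow> real)
   \<Rightarrow> nat set \<Rightarrow> bool" where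
  "compatible n l r p b lam S \<longleftrightarrow>
     S \<subseteq> {..<n} \<and> (\<forall>i\<in>S. utility l r p b lam S i \<ge> 0)"

definition s_opt ::
  "nat \<Rightarrow> (nat \<Rightarrow> real) \<Rightarrow> (nat \<Rightarrow> real) \<Rightarrow> (nat \<Rightarrow> real) \<Rightarrow> (nat \<Rightarrow> real) \<Rightarrow> (nat \<Rightarrow> real)
   \<Rightarrow> nat" where
  "s_opt n l r p b lam = Max {card S | S. compatible n l r p b lam S}"

end

theory Submission
  imports Defs
begin

lemma compat_mono:
  assumes "valid_population n l r p b lam S0"
    and "valid_population n l r p b lam' S0"
    and "\<forall>i<n. lam i \<ge> lam' i"
    and "compatible n l r p b lam S"
  shows "compatible n l r p b lam' S"
  unfolding compatible_def
proof (intro conjI ballI)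
  show "S \<subseteq> {..<n}" using assms(4) by (simp add: compatible_def)
  fix i assume i: "i \<in> S"
  hence iN: "i < n" using assms(4) by (auto simp: compatible_def)
  have bi: "0 \<le> b i" using assms(1) iN by (simp add: valid_population_def)
  have li: "lam' i * b i \<le> lam i * b i" using assms(3) iN bi by (simp add: mult_right_mono)
  have "0 \<le> utility l r p b lam S i" using assms(4) i by (simp add: compatible_def)
  also have "\<dots> \<le> utility l r p b lam' S i"
    unfolding utility_def
    by (rule sum_mono) (use li in auto)
  finally show "0 \<le> utility l r p b lam' S i" .
qed

theorem proposition5:
  fixes n :: nat and l r p b lam lam' :: "nat \<Rightarrow> real" and S0 :: "nat set"
  assumes "valid_population n l r p b lam S0"
    and "valid_population n l r p b lam' S0"
    and "\<forall>i<n. lam i \<ge> lam' i"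
  shows "s_opt n l r p b lam \<le> s_opt n l r p b lam'"
proof -
  let ?A = "{card S | S. compatible n l r p b lam S}"
  let ?B = "{card S | S. compatible n l r p b lam' S}"
  have sub: "?A \<subseteq> ?B" using compat_mono[OF assms] by blast
  have "?B \<subseteq> card ` Pow {..<n}" by (auto simp: compatible_def)
  hence fin: "finite ?B" by (rule finite_subset) simp
  have ne: "?A \<noteq> {}"
    by (rule ccontr) (auto simp: compatible_def utility_def)
  show ?thesis unfolding s_opt_def
    by (rule Max_mono[OF sub ne fin])
qed

end
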